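(* Let $G=(V,E)$ be an atomic bispanning graph with vertex-connectivity $2$, and let $\{x,y\}\subseteq V$ be a vertex cut. Then $G$ contains no edge with ends $x$ and $y$, and $G$ is the $2$-clique sum of two simple bispanning graphs: there exist simple bispanning graphs $G_1$, $G_2$ (on disjoint vertex and edge sets) with edges $d_1$ of $G_1$ and $d_2$ of $G_2$ such that $G$ is obtained from the disjoint union of $G_1$ and $G_2$ by identifying the two ends of $d_1$ with the two ends of $d_2$ and deleting $d_1$ and $d_2$.
   Context: Graphs are finite, undirected, may have parallel edges, no loops; simple means no parallel edges. A spanning tree of $G$ is $T\subseteq E$ with $(V,T)$ connected and acyclic; $G$ is bispanning if $E$ is the union of two disjoint spanning trees. A bispanning graph is atomic if its only bispanning subgraphs are itself and single vertices. A vertex cut is a vertex set whose deletion increases the number of connected components; vertex-connectivity is the largest $k$ with $|V|>k$ such that deleting fewer than $k$ vertices leaves $G$ connected. *)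

theory Defs
  imports Main
begin

text \<open>A (multi)graph is a triple (V, E, h): a finite vertex set V, a finite edge
set E, and an incidence map h sending each edge to its set of ends, which is a
2-element subset of V (no loops; parallel edges allowed).\<close>

definition graph :: "'a set \<Rightarrow> 'e set \<Rightarrow> ('e \<Rightarrow> 'a set) \<Rightarrow> bool" where
  "graph V E h \<longleftrightarrow> finite V \<and> finite E \<and> (\<forall>e\<in>E. h e \<subseteq> V \<and> card (h e) = 2)"

definition simple_graph :: "'a set \<Rightarrow> 'e set \<Rightarrow> ('e \<Rightarrow> 'a set) \<Rightarrow> bool" where
  "simple_graph V E h \<longleftrightarrow> graph V E h \<and> inj_on h E"

definition adj_rel :: "'e set \<Rightarrow> ('e \<Rightarrow> 'a set) \<Rightarrow> ('a \<times> 'a) set" where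
  "adj_rel F h = {(u, v). \<exists>e\<in>F. h e = {u, v}}"

definition connected_graph :: "'a set \<Rightarrow> 'e set \<Rightarrow> ('e \<Rightarrow> 'a set) \<Rightarrow> bool" where
  "connected_graph V F h \<longleftrightarrow> (\<forall>u\<in>V. \<forall>v\<in>V. (u, v) \<in> (adj_rel F h)\<^sup>*)"

text \<open>Acyclic: no edge lies on a cycle, i.e. the ends of every edge e are not
joined by a walk avoiding e (this also excludes pairs of parallel edges).\<close>
definition acyclic_graph :: "'e set \<Rightarrow> ('e \<Rightarrow> 'a set) \<Rightarrow> bool" where
  "acyclic_graph F h \<longleftrightarrow>
     (\<forall>e\<in>F. \<forall>u v. h e = {u, v} \<longrightarrow> (u, v) \<notin> (adj_rel (F - {e}) h)\<^sup>*)"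

definition spanning_tree :: "'a set \<Rightarrow> 'e set \<Rightarrow> ('e \<Rightarrow> 'a set) \<Rightarrow> 'e set \<Rightarrow> bool" where
  "spanning_tree V E h T \<longleftrightarrow> T \<subseteq> E \<and> connected_graph V T h \<and> acyclic_graph T h"

definition bispanning :: "'a set \<Rightarrow> 'e set \<Rightarrow> ('e \<Rightarrow> 'a set) \<Rightarrow> bool" where
  "bispanning V E h \<longleftrightarrow> graph V E h \<and>
     (\<exists>T1 T2. T1 \<inter> T2 = {} \<and> T1 \<union> T2 = E \<and> spanning_tree V E h T1 \<and> spanning_tree V E h T2)"

definition subgraph :: "'a set \<Rightarrow> 'e set \<Rightarrow> 'a set \<Rightarrow> 'e set \<Rightarrow> ('e \<Rightarrow> 'a set) \<Rightarrow> bool" where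
  "subgraph V' E' V E h \<longleftrightarrow> V' \<subseteq> V \<and> E' \<subseteq> E \<and> (\<forall>e\<in>E'. h e \<subseteq> V')"

definition atomic :: "'a set \<Rightarrow> 'e set \<Rightarrow> ('e \<Rightarrow> 'a set) \<Rightarrow> bool" where
  "atomic V E h \<longleftrightarrow> bispanning V E h \<and>
     (\<forall>V' E'. V' \<noteq> {} \<and> subgraph V' E' V E h \<and> bispanning V' E' h \<longrightarrow>
        (V' = V \<and> E' = E) \<or> card V' = 1)"

definition del_edges :: "'a set \<Rightarrow> 'e set \<Rightarrow> ('e \<Rightarrow> 'a set) \<Rightarrow> 'e set" where
  "del_edges S E h = {e\<in>E. h e \<inter> S = {}}"

definition num_components :: "'a set \<Rightarrow> 'e set \<Rightarrow> ('e \<Rightarrow> 'a set) \<Rightarrow> nat" where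
  "num_components V E h = card {{w\<in>V. (v, w) \<in> (adj_rel E h)\<^sup>*} | v. v \<in> V}"

definition vertex_cut :: "'a set \<Rightarrow> 'e set \<Rightarrow> ('e \<Rightarrow> 'a set) \<Rightarrow> 'a set \<Rightarrow> bool" where
  "vertex_cut V E h S \<longleftrightarrow> S \<subseteq> V \<and>
     num_components (V - S) (del_edges S E h) h > num_components V E h"

definition k_connected :: "nat \<Rightarrow> 'a set \<Rightarrow> 'e set \<Rightarrow> ('e \<Rightarrow> 'a set) \<Rightarrow> bool" where
  "k_connected k V E h \<longleftrightarrow> card V > k \<and>
     (\<forall>S\<subseteq>V. card S < k \<longrightarrow> connected_graph (V - S) (del_edges S E h) h)"

definition vertex_connectivity :: "'a set \<Rightarrow> 'e set \<Rightarrow> ('e \<Rightarrow> 'a set) \<Rightarrow> nat" where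
  "vertex_connectivity V E h = (GREATEST k. k_connected k V E h)"

text \<open>G = (V,E,h) is obtained (up to isomorphism) from the disjoint union of
G1 = (V1,E1,h1) and G2 = (V2,E2,h2) by identifying the two ends of d1 with the two
ends of d2 (via a bijection sigma) and deleting d1 and d2.  phi maps the vertices
of the disjoint union onto V, psi maps the remaining edges bijectively onto E.\<close>
definition two_clique_sum ::
  "'v set \<Rightarrow> 'f set \<Rightarrow> ('f \<Rightarrow> 'v set) \<Rightarrow> 'f \<Rightarrow> 'v set \<Rightarrow> 'f set \<Rightarrow> ('f \<Rightarrow> 'v set) \<Rightarrow> 'f \<Rightarrow>
   'a set \<Rightarrow> 'e set \<Rightarrow> ('e \<Rightarrow> 'a set) \<Rightarrow> bool" where
  "two_clique_sum V1 E1 h1 d1 V2 E2 h2 d2 V E h \<longleftrightarrow>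
     (\<exists>\<sigma> \<phi> \<psi>. bij_betw \<sigma> (h1 d1) (h2 d2) \<and>
        \<phi> ` (V1 \<union> V2) = V \<and>
        (\<forall>u\<in>V1 \<union> V2. \<forall>w\<in>V1 \<union> V2. \<phi> u = \<phi> w \<longleftrightarrow>
            u = w \<or> (u \<in> h1 d1 \<and> w = \<sigma> u) \<or> (w \<in> h1 d1 \<and> u = \<sigma> w)) \<and>
        bij_betw \<psi> ((E1 - {d1}) \<union> (E2 - {d2})) E \<and>
        (\<forall>e\<in>E1 - {d1}. h (\<psi> e) = \<phi> ` h1 e) \<and>
        (\<forall>e\<in>E2 - {d2}. h (\<psi> e) = \<phi> ` h2 e))"

end

theory Submission
  imports Defs
begin


lemma adj_rel_mono: "F \<subseteq> G \<Longrightarrow> adj_rel F h \<subseteq> adj_rel G h"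
  unfolding adj_rel_def by auto

lemma rtr_mono: "F \<subseteq> G \<Longrightarrow> (u,v) \<in> (adj_rel F h)\<^sup>* \<Longrightarrow> (u,v) \<in> (adj_rel G h)\<^sup>*"
  by (meson adj_rel_mono rtrancl_mono subsetD)

lemma adj_sym: "sym (adj_rel F h)"
  unfolding adj_rel_def sym_def by (auto simp: insert_commute)

lemma rtr_sym: "(u,v) \<in> (adj_rel F h)\<^sup>* \<Longrightarrow> (v,u) \<in> (adj_rel F h)\<^sup>*"
  using sym_rtrancl[OF adj_sym] by (meson symD)

lemma adj_insert: "adj_rel (insert e F) h = {(u,v). h e = {u,v}} \<union> adj_rel F h"
  unfolding adj_rel_def by auto

lemma adj_empty: "adj_rel {} h = {}"
  unfolding adj_rel_def by auto

lemma pairs_eq: "{(u,v). {c,d} = {u,v}} = {(c,d),(d,c)}"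
  by (auto simp: doubleton_eq_iff)

lemma split_lemma:
  assumes sym: "sym R" and p: "(a,b) \<in> (R \<union> {(c,d),(d,c)})\<^sup>*"
  shows "(a,b) \<in> R\<^sup>* \<or> ((a,c) \<in> R\<^sup>* \<and> (d,b) \<in> R\<^sup>*) \<or> ((a,d) \<in> R\<^sup>* \<and> (c,b) \<in> R\<^sup>*)"
  using p
proof (induction rule: rtrancl_induct)
  case base then show ?case by auto
next
  case (step w w')
  have s: "sym (R\<^sup>*)" using sym_rtrancl[OF sym] .
  from step.hyps(2) consider "(w,w') \<in> R" | "w = c" "w' = d" | "w = d" "w' = c" by auto
  then show ?case
  proof cases
    case 1 then show ?thesis using step.IH by (meson rtrancl.rtrancl_into_rtrancl)
  next
    case 2
    from step.IH show ?thesis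
    proof (elim disjE conjE)
      assume "(a,w) \<in> R\<^sup>*" then show ?thesis using 2 by auto
    next
      assume "(a,c) \<in> R\<^sup>*" "(d,w) \<in> R\<^sup>*" then show ?thesis using 2 by auto
    next
      assume "(a,d) \<in> R\<^sup>*" "(c,w) \<in> R\<^sup>*"
      then have "(a,w') \<in> R\<^sup>*" using 2 s by (metis rtrancl_trans symD)
      then show ?thesis by auto
    qed
  next
    case 3
    from step.IH show ?thesis
    proof (elim disjE conjE)
      assume "(a,w) \<in> R\<^sup>*" then show ?thesis using 3 by auto
    next
      assume "(a,d) \<in> R\<^sup>*" "(c,w) \<in> R\<^sup>*" then show ?thesis using 3 by auto
    next
      assume "(a,c) \<in> R\<^sup>*" "(d,w) \<in> R\<^sup>*"
      then have "(a,w') \<in> R\<^sup>*" using 3 s by (metis rtrancl_trans symD)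
      then show ?thesis by auto
    qed
  qed
qed

lemma acyclic_mono: "acyclic_graph F h \<Longrightarrow> F' \<subseteq> F \<Longrightarrow> acyclic_graph F' h"
  unfolding acyclic_graph_def
  by (meson Diff_mono order_refl rtr_mono subsetD)

lemma cyc:
  assumes "acyclic_graph T h" "F \<subseteq> T" "finite F" "(x,y) \<in> (adj_rel F h)\<^sup>*"
    "(x,y) \<in> (adj_rel (T - F) h)\<^sup>*" "x \<noteq> y"
  shows False
  using assms
proof (induction "card F" arbitrary: F rule: less_induct)
  case less
  have "F \<noteq> {}" using less.prems(4,6) by (auto simp: adj_empty)
  then obtain e where e: "e \<in> F" by auto
  have FF: "F = insert e (F - {e})" using e by auto
  show ?case
  proof (cases "(x,y) \<in> (adj_rel (F - {e}) h)\<^sup>*")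
    case True
    have "card (F - {e}) < card F" using e less.prems(3) by (rule card_Diff1_less[rotated])
    moreover have "(x,y) \<in> (adj_rel (T - (F - {e})) h)\<^sup>*"
      using less.prems(5) by (rule rtr_mono[rotated]) auto
    ultimately show False using less.hyps[of "F - {e}"] less.prems True by auto
  next
    case False
    show False
    proof (cases "\<exists>u v. h e = {u,v}")
      case False
      then have "adj_rel F h = adj_rel (F - {e}) h"
        using adj_insert[of e "F - {e}" h] FF by auto
      then show False using less.prems(4) \<open>(x,y) \<notin> _\<close> by auto
    next
      case True
      then obtain u v where uv: "h e = {u,v}" by auto
      have "adj_rel F h = adj_rel (F - {e}) h \<union> {(u,v),(v,u)}"
        using adj_insert[of e "F - {e}" h] FF uv pairs_eq[of u v] by auto
      then have "(x,y) \<in> (adj_rel (F - {e}) h \<union> {(u,v),(v,u)})\<^sup>*" using less.prems(4) by simp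
      from split_lemma[OF adj_sym this] False
      have c: "((x,u) \<in> (adj_rel (F - {e}) h)\<^sup>* \<and> (v,y) \<in> (adj_rel (F - {e}) h)\<^sup>*) \<or>
               ((x,v) \<in> (adj_rel (F - {e}) h)\<^sup>* \<and> (u,y) \<in> (adj_rel (F - {e}) h)\<^sup>*)" by auto
      have s1: "F - {e} \<subseteq> T - {e}" using less.prems(2) by auto
      have s2: "T - F \<subseteq> T - {e}" using e by auto
      have xy: "(x,y) \<in> (adj_rel (T - {e}) h)\<^sup>*" using rtr_mono[OF s2 less.prems(5)] .
      have "(u,v) \<in> (adj_rel (T - {e}) h)\<^sup>*"
        using c
      proof (elim disjE conjE)
        assume a: "(x,u) \<in> (adj_rel (F - {e}) h)\<^sup>*" "(v,y) \<in> (adj_rel (F - {e}) h)\<^sup>*"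
        have "(u,x) \<in> (adj_rel (T - {e}) h)\<^sup>*" using rtr_mono[OF s1 rtr_sym[OF a(1)]] .
        moreover have "(y,v) \<in> (adj_rel (T - {e}) h)\<^sup>*" using rtr_mono[OF s1 rtr_sym[OF a(2)]] .
        ultimately show ?thesis using xy by (meson rtrancl_trans)
      next
        assume a: "(x,v) \<in> (adj_rel (F - {e}) h)\<^sup>*" "(u,y) \<in> (adj_rel (F - {e}) h)\<^sup>*"
        have "(v,x) \<in> (adj_rel (T - {e}) h)\<^sup>*" using rtr_mono[OF s1 rtr_sym[OF a(1)]] .
        moreover have "(y,u) \<in> (adj_rel (T - {e}) h)\<^sup>*" using rtr_mono[OF s1 rtr_sym[OF a(2)]] .
        ultimately have "(v,u) \<in> (adj_rel (T - {e}) h)\<^sup>*" using xy by (meson rtrancl_trans)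
        then show ?thesis by (rule rtr_sym)
      qed
      moreover have "e \<in> T" using e less.prems(2) by auto
      ultimately show False using less.prems(1) uv unfolding acyclic_graph_def by blast
    qed
  qed
qed

lemma hub_conn:
  assumes "\<forall>v\<in>W. (v,x) \<in> (adj_rel F h)\<^sup>* \<or> (v,y) \<in> (adj_rel F h)\<^sup>*"
    and "(x,y) \<in> (adj_rel F h)\<^sup>*"
  shows "connected_graph W F h"
  unfolding connected_graph_def
proof (intro ballI)
  fix u v assume u: "u \<in> W" and v: "v \<in> W"
  have xy: "(x,y) \<in> (adj_rel F h)\<^sup>*" "(y,x) \<in> (adj_rel F h)\<^sup>*" using assms(2) rtr_sym by auto
  have "(u,x) \<in> (adj_rel F h)\<^sup>*" using assms(1) u xy by (meson rtrancl_trans)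
  moreover have "(x,v) \<in> (adj_rel F h)\<^sup>*" using assms(1) v xy by (meson rtrancl_trans rtr_sym)
  ultimately show "(u,v) \<in> (adj_rel F h)\<^sup>*" by (meson rtrancl_trans)
qed



definition side :: "'e set \<Rightarrow> ('e \<Rightarrow> 'a set) \<Rightarrow> 'a \<Rightarrow> 'a \<Rightarrow> 'a set \<Rightarrow> 'e set" where
  "side E h x y A = {e\<in>E. h e \<subseteq> A \<union> {x,y} \<and> h e \<noteq> {x,y}}"

definition hx :: "'a \<Rightarrow> 'a \<Rightarrow> ('e \<Rightarrow> 'a set) \<Rightarrow> 'e option \<Rightarrow> 'a set" where
  "hx x y h = case_option {x,y} h"

lemma hx_simps[simp]: "hx x y h None = {x,y}" "hx x y h (Some e) = h e"
  by (auto simp: hx_def)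

lemma adj_Some: "adj_rel (Some ` F) (hx x y h) = adj_rel F h"
  unfolding adj_rel_def by auto

lemma adj_None: "adj_rel (insert None X) (hx x y h) = adj_rel X (hx x y h) \<union> {(x,y),(y,x)}"
  unfolding adj_rel_def by (auto simp: doubleton_eq_iff)

lemma acyclic_Some: "acyclic_graph F h \<Longrightarrow> acyclic_graph (Some ` F) (hx x y h)"
  unfolding acyclic_graph_def
proof (intro ballI allI impI)
  fix e u v assume a: "\<forall>e\<in>F. \<forall>u v. h e = {u, v} \<longrightarrow> (u, v) \<notin> (adj_rel (F - {e}) h)\<^sup>*"
    and e: "e \<in> Some ` F" and uv: "hx x y h e = {u,v}"
  then obtain f where f: "f \<in> F" "e = Some f" by auto
  have "Some ` F - {e} = Some ` (F - {f})" using f by auto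
  then show "(u, v) \<notin> (adj_rel (Some ` F - {e}) (hx x y h))\<^sup>*"
    using a f uv by (simp add: adj_Some)
qed

locale cut_setup =
  fixes V :: "'a set" and E :: "'e set" and h x y and A B :: "'a set"
  assumes G: "graph V E h" and at: "atomic V E h" and xy: "x \<noteq> y" "x \<in> V" "y \<in> V"
    and AB: "A \<union> B = V - {x,y}" "A \<inter> B = {}" "A \<noteq> {}" "B \<noteq> {}"
    and noAB: "\<forall>e\<in>E. h e \<inter> A = {} \<or> h e \<inter> B = {}"
begin

lemma Vdec: "V = A \<union> B \<union> {x,y}" "x \<notin> A" "y \<notin> A" "x \<notin> B" "y \<notin> B" "A \<subseteq> V" "B \<subseteq> V"
  using AB xy by auto

lemma eV: "e \<in> E \<Longrightarrow> h e \<subseteq> V" "e \<in> E \<Longrightarrow> card (h e) = 2"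
  using G unfolding graph_def by auto

lemma finV: "finite V" "finite E" using G unfolding graph_def by auto

lemma toA: assumes "f \<in> E" "h f \<inter> A \<noteq> {}" shows "f \<in> side E h x y A"
proof -
  have "h f \<inter> B = {}" using noAB assms by auto
  then have "h f \<subseteq> A \<union> {x,y}" using eV(1)[OF assms(1)] Vdec(1) by blast
  moreover have "h f \<noteq> {x,y}" using assms(2) Vdec(2,3) by auto
  ultimately show ?thesis using assms unfolding side_def by auto
qed

lemma toB: assumes "f \<in> E" "h f \<inter> B \<noteq> {}" shows "f \<in> side E h x y B"
proof -
  have "h f \<inter> A = {}" using noAB assms by auto
  then have "h f \<subseteq> B \<union> {x,y}" using eV(1)[OF assms(1)] Vdec(1) by blast
  moreover have "h f \<noteq> {x,y}" using assms(2) Vdec(4,5) by auto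
  ultimately show ?thesis using assms unfolding side_def by auto
qed

lemma sideAB: "side E h x y A \<inter> side E h x y B = {}"
proof (rule ccontr)
  assume "side E h x y A \<inter> side E h x y B \<noteq> {}"
  then obtain e where "e \<in> E" "h e \<subseteq> A \<union> {x,y}" "h e \<subseteq> B \<union> {x,y}" "h e \<noteq> {x,y}"
    unfolding side_def by auto
  then have "h e \<subseteq> {x,y}" using AB(2) by blast
  moreover have "card (h e) = card {x,y}" using eV \<open>e \<in> E\<close> xy by auto
  ultimately have "h e = {x,y}" by (intro card_subset_eq) auto
  then show False using \<open>h e \<noteq> {x,y}\<close> by auto
qed

lemma sideE: "side E h x y A \<subseteq> E" "side E h x y B \<subseteq> E" unfolding side_def by auto

lemma P1_gen:
  assumes T: "T \<subseteq> E" and p: "(v,w) \<in> (adj_rel T h)\<^sup>*" and v: "v \<in> A \<union> {x,y}"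
  shows "(w \<in> A \<and> (v,w) \<in> (adj_rel (T \<inter> side E h x y A) h)\<^sup>*) \<or>
         (v,x) \<in> (adj_rel (T \<inter> side E h x y A) h)\<^sup>* \<or> (v,y) \<in> (adj_rel (T \<inter> side E h x y A) h)\<^sup>*"
  using p
proof (induction rule: rtrancl_induct)
  case base then show ?case using v by auto
next
  case (step w w')
  then obtain f where f: "f \<in> T" "h f = {w,w'}" by (auto simp: adj_rel_def)
  from step.IH show ?case
  proof (elim disjE)
    assume a: "w \<in> A \<and> (v,w) \<in> (adj_rel (T \<inter> side E h x y A) h)\<^sup>*"
    have fE: "f \<in> E" using f T by auto
    have fs: "f \<in> side E h x y A" using toA[OF fE] a f by auto
    then have "(w,w') \<in> adj_rel (T \<inter> side E h x y A) h" using f unfolding adj_rel_def by auto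
    then have c: "(v,w') \<in> (adj_rel (T \<inter> side E h x y A) h)\<^sup>*" using a by auto
    have "w' \<in> A \<union> {x,y}" using fs f unfolding side_def by auto
    then show ?thesis using c by auto
  qed auto
qed

lemma P1:
  assumes T: "T \<subseteq> E" "connected_graph V T h" and v: "v \<in> A \<union> {x,y}"
  shows "(v,x) \<in> (adj_rel (T \<inter> side E h x y A) h)\<^sup>* \<or> (v,y) \<in> (adj_rel (T \<inter> side E h x y A) h)\<^sup>*"
proof -
  have "(v,x) \<in> (adj_rel T h)\<^sup>*" using T v Vdec xy unfolding connected_graph_def by auto
  from P1_gen[OF T(1) this v] show ?thesis using Vdec by auto
qed

lemma P2_gen:
  assumes T: "T \<subseteq> E" and p: "(x,w) \<in> (adj_rel T h)\<^sup>*"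
  shows "w = x \<or> (w \<in> A \<and> (x,w) \<in> (adj_rel (T \<inter> side E h x y A) h)\<^sup>*) \<or>
         (w \<in> B \<and> (x,w) \<in> (adj_rel (T \<inter> side E h x y B) h)\<^sup>*) \<or>
         (x,y) \<in> (adj_rel (T \<inter> side E h x y A) h)\<^sup>* \<or> (x,y) \<in> (adj_rel (T \<inter> side E h x y B) h)\<^sup>* \<or>
         (\<exists>e\<in>T. h e = {x,y})"
  using p
proof (induction rule: rtrancl_induct)
  case base then show ?case by auto
next
  case (step w w')
  then obtain f where f: "f \<in> T" "h f = {w,w'}" by (auto simp: adj_rel_def)
  have fE: "f \<in> E" using f T by auto
  have w'V: "w' \<in> V" "w \<in> V" using eV(1)[OF fE] f by auto
  from step.IH show ?case
  proof (elim disjE)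
    assume a: "w = x"
    consider "w' \<in> A" | "w' \<in> B" | "w' = x" | "w' = y" using w'V Vdec by auto
    then show ?thesis
    proof cases
      case 1
      have fs: "f \<in> side E h x y A" using toA[OF fE] 1 f by auto
      then have "(w,w') \<in> adj_rel (T \<inter> side E h x y A) h" using f unfolding adj_rel_def by auto
      then show ?thesis using a 1 by auto
    next
      case 2
      have fs: "f \<in> side E h x y B" using toB[OF fE] 2 f by auto
      then have "(w,w') \<in> adj_rel (T \<inter> side E h x y B) h" using f unfolding adj_rel_def by auto
      then show ?thesis using a 2 by auto
    next
      case 3 then show ?thesis by auto
    next
      case 4 then show ?thesis using a f by auto
    qed
  next
    assume a: "w \<in> A \<and> (x,w) \<in> (adj_rel (T \<inter> side E h x y A) h)\<^sup>*"
    have fs: "f \<in> side E h x y A" using toA[OF fE] a f by auto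
    then have "(w,w') \<in> adj_rel (T \<inter> side E h x y A) h" using f unfolding adj_rel_def by auto
    then have c: "(x,w') \<in> (adj_rel (T \<inter> side E h x y A) h)\<^sup>*" using a by auto
    have "w' \<in> A \<union> {x,y}" using fs f unfolding side_def by auto
    then show ?thesis using c by auto
  next
    assume a: "w \<in> B \<and> (x,w) \<in> (adj_rel (T \<inter> side E h x y B) h)\<^sup>*"
    have fs: "f \<in> side E h x y B" using toB[OF fE] a f by auto
    then have "(w,w') \<in> adj_rel (T \<inter> side E h x y B) h" using f unfolding adj_rel_def by auto
    then have c: "(x,w') \<in> (adj_rel (T \<inter> side E h x y B) h)\<^sup>*" using a by auto
    have "w' \<in> B \<union> {x,y}" using fs f unfolding side_def by auto
    then show ?thesis using c by auto
  qed auto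
qed

lemma P2:
  assumes T: "T \<subseteq> E" "connected_graph V T h"
  shows "(x,y) \<in> (adj_rel (T \<inter> side E h x y A) h)\<^sup>* \<or> (x,y) \<in> (adj_rel (T \<inter> side E h x y B) h)\<^sup>* \<or>
         (\<exists>e\<in>T. h e = {x,y})"
proof -
  have "(x,y) \<in> (adj_rel T h)\<^sup>*" using T xy unfolding connected_graph_def by auto
  from P2_gen[OF T(1) this] show ?thesis using Vdec xy by auto
qed

end


lemma single_edge:
  assumes "h e = {u,v}" "u \<noteq> v"
  shows "connected_graph {u,v} {e} h" "acyclic_graph {e} h"
proof -
  have "(u,v) \<in> adj_rel {e} h" using assms unfolding adj_rel_def by auto
  then show "connected_graph {u,v} {e} h"
    by (intro hub_conn[where x=u and y=v]) auto
  show "acyclic_graph {e} h"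
    unfolding acyclic_graph_def
  proof (intro ballI allI impI)
    fix f a b assume "f \<in> {e}" "h f = {a,b}"
    then have "a \<noteq> b" using assms by (auto simp: doubleton_eq_iff)
    then show "(a, b) \<notin> (adj_rel ({e} - {f}) h)\<^sup>*" using \<open>f \<in> {e}\<close> by (simp add: adj_empty)
  qed
qed

context cut_setup
begin

lemma V_not_pair: "V \<noteq> {u,v}"
proof
  assume V: "V = {u,v}"
  obtain a b where ab: "a \<in> A" "b \<in> B" using AB by auto
  have "a \<noteq> b" "a \<noteq> x" "a \<noteq> y" using ab AB(2) Vdec(2,3) by auto
  moreover have "a \<in> V" "x \<in> V" "y \<in> V" using ab Vdec(6) xy by auto
  ultimately show False using V xy(1) by auto
qed

lemma no_proper:
  assumes "V' \<subseteq> V" "E' \<subseteq> E" "\<forall>e\<in>E'. h e \<subseteq> V'" "V' \<noteq> V" "u \<in> V'" "v \<in> V'" "u \<noteq> v"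
    "T1 \<inter> T2 = {}" "T1 \<union> T2 = E'" "connected_graph V' T1 h" "connected_graph V' T2 h"
    "acyclic_graph T1 h" "acyclic_graph T2 h"
  shows False
proof -
  have gr: "graph V' E' h" using assms finV eV unfolding graph_def by (auto intro: finite_subset)
  have "bispanning V' E' h" unfolding bispanning_def spanning_tree_def using gr assms by blast
  moreover have "subgraph V' E' V E h" unfolding subgraph_def using assms by auto
  moreover have "card V' \<noteq> 1" using assms(5,6,7) by (metis card_1_singletonE singletonD)
  moreover have "V' \<noteq> {}" using assms(5) by auto
  ultimately show False using at assms(4) unfolding atomic_def by blast
qed

lemma simpleG: "inj_on h E"
proof (rule inj_onI, rule ccontr)
  fix e f assume ef: "e \<in> E" "f \<in> E" "h e = h f" "e \<noteq> f"
  obtain u v where uv: "h e = {u,v}" "u \<noteq> v" using eV(2)[OF ef(1)] by (meson card_2_iff)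
  have s1: "connected_graph {u,v} {e} h" "acyclic_graph {e} h" using single_edge[of h e u v, OF uv] by auto
  have s2: "connected_graph {u,v} {f} h" "acyclic_graph {f} h" using single_edge[of h f u v] uv ef by auto
  show False
    using no_proper[of "{u,v}" "{e,f}" u v "{e}" "{f}"] s1 s2 ef uv eV(1)[OF ef(1)] V_not_pair[of u v]
    by auto
qed

lemma finT: "T \<subseteq> E \<Longrightarrow> finite T" using finV(2) finite_subset by auto

lemma exAB:
  assumes T: "T \<subseteq> E" "acyclic_graph T h"
    and a: "(x,y) \<in> (adj_rel (T \<inter> side E h x y A) h)\<^sup>*" and b: "(x,y) \<in> (adj_rel (T \<inter> side E h x y B) h)\<^sup>*"
  shows False
proof -
  have "T \<inter> side E h x y A \<subseteq> T - (T \<inter> side E h x y B)" using sideAB by auto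
  from rtr_mono[OF this a] show False
    using cyc[OF T(2) _ _ b] finT[OF T(1)] xy(1) by auto
qed

lemma exAC:
  assumes T: "T \<subseteq> E" "acyclic_graph T h"
    and a: "(x,y) \<in> (adj_rel (T \<inter> side E h x y A) h)\<^sup>*" and e: "e \<in> T" "h e = {x,y}"
  shows False
proof -
  have "e \<notin> side E h x y A" using e unfolding side_def by auto
  then have "T \<inter> side E h x y A \<subseteq> T - {e}" by auto
  from rtr_mono[OF this a] have 1: "(x,y) \<in> (adj_rel (T - {e}) h)\<^sup>*" .
  have "(x,y) \<in> adj_rel {e} h" using e unfolding adj_rel_def by auto
  then show False using cyc[OF T(2), of "{e}" x y] 1 e xy(1) by auto
qed

lemma exBC:
  assumes T: "T \<subseteq> E" "acyclic_graph T h"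
    and a: "(x,y) \<in> (adj_rel (T \<inter> side E h x y B) h)\<^sup>*" and e: "e \<in> T" "h e = {x,y}"
  shows False
proof -
  have "e \<notin> side E h x y B" using e unfolding side_def by auto
  then have "T \<inter> side E h x y B \<subseteq> T - {e}" by auto
  from rtr_mono[OF this a] have 1: "(x,y) \<in> (adj_rel (T - {e}) h)\<^sup>*" .
  have "(x,y) \<in> adj_rel {e} h" using e unfolding adj_rel_def by auto
  then show False using cyc[OF T(2), of "{e}" x y] 1 e xy(1) by auto
qed

lemma connA:
  assumes T: "T \<subseteq> E" "connected_graph V T h" and a: "(x,y) \<in> (adj_rel (T \<inter> side E h x y A) h)\<^sup>*"
  shows "connected_graph (A \<union> {x,y}) (T \<inter> side E h x y A) h"
  using hub_conn[OF _ a] P1[OF T] by blast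

lemma VA: "A \<union> {x,y} \<subseteq> V" "A \<union> {x,y} \<noteq> V"
proof -
  show "A \<union> {x,y} \<subseteq> V" using Vdec(6) xy by auto
  obtain b where b: "b \<in> B" using AB(4) by auto
  then have "b \<notin> A \<union> {x,y}" "b \<in> V" using AB(2) Vdec(4,5,7) by auto
  then show "A \<union> {x,y} \<noteq> V" by auto
qed

lemma sideV: "\<forall>e\<in>F. F \<subseteq> side E h x y A \<longrightarrow> h e \<subseteq> A \<union> {x,y}"
  unfolding side_def by auto

lemma SAA:
  assumes T1: "T1 \<subseteq> E" "connected_graph V T1 h" "acyclic_graph T1 h"
    and T2: "T2 \<subseteq> E" "connected_graph V T2 h" "acyclic_graph T2 h"
    and d: "T1 \<inter> T2 = {}"
    and a1: "(x,y) \<in> (adj_rel (T1 \<inter> side E h x y A) h)\<^sup>*"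
    and a2: "(x,y) \<in> (adj_rel (T2 \<inter> side E h x y A) h)\<^sup>*"
  shows False
proof -
  let ?F1 = "T1 \<inter> side E h x y A" and ?F2 = "T2 \<inter> side E h x y A"
  have h1: "\<forall>e\<in>?F1 \<union> ?F2. h e \<subseteq> A \<union> {x,y}" unfolding side_def by auto
  have h2: "?F1 \<union> ?F2 \<subseteq> E" using T1(1) T2(1) by auto
  have h3: "?F1 \<inter> ?F2 = {}" using d by auto
  have h4: "acyclic_graph ?F1 h" "acyclic_graph ?F2 h" using acyclic_mono[OF T1(3)] acyclic_mono[OF T2(3)] by auto
  show False
    by (rule no_proper[OF VA(1) h2 h1 VA(2) _ _ xy(1) h3 refl connA[OF T1(1,2) a1] connA[OF T2(1,2) a2] h4]) auto
qed

lemma SCA: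
  assumes T1: "T1 \<subseteq> E" "connected_graph V T1 h" "acyclic_graph T1 h"
    and T2: "T2 \<subseteq> E" "connected_graph V T2 h" "acyclic_graph T2 h"
    and d: "T1 \<inter> T2 = {}"
    and e: "e \<in> T1" "h e = {x,y}"
    and a2: "(x,y) \<in> (adj_rel (T2 \<inter> side E h x y A) h)\<^sup>*"
  shows False
proof -
  let ?F = "insert e (T1 \<inter> side E h x y A)" and ?F2 = "T2 \<inter> side E h x y A"
  have ed: "(x,y) \<in> adj_rel ?F h" using e unfolding adj_rel_def by auto
  have c1: "connected_graph (A \<union> {x,y}) ?F h"
  proof (rule hub_conn[where x=x and y=y])
    show "(x,y) \<in> (adj_rel ?F h)\<^sup>*" by (rule r_into_rtrancl[OF ed])
    show "\<forall>v\<in>A \<union> {x, y}. (v, x) \<in> (adj_rel ?F h)\<^sup>* \<or> (v, y) \<in> (adj_rel ?F h)\<^sup>*"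
    proof
      fix v assume v: "v \<in> A \<union> {x,y}"
      have sub: "T1 \<inter> side E h x y A \<subseteq> ?F" by auto
      show "(v, x) \<in> (adj_rel ?F h)\<^sup>* \<or> (v, y) \<in> (adj_rel ?F h)\<^sup>*"
        using P1[OF T1(1,2) v] rtr_mono[OF sub, of v x h] rtr_mono[OF sub, of v y h] by blast
    qed
  qed
  have sub1: "?F \<subseteq> T1" using e(1) by blast
  have ac1: "acyclic_graph ?F h" using acyclic_mono[OF T1(3) sub1] .
  have h1: "\<forall>ea\<in>?F \<union> ?F2. h ea \<subseteq> A \<union> {x,y}"
    using e unfolding side_def by auto
  have h2: "?F \<union> ?F2 \<subseteq> E" using T1(1) T2(1) e by auto
  have h3: "?F \<inter> ?F2 = {}" using d e by auto
  have h4: "acyclic_graph ?F2 h" using acyclic_mono[OF T2(3)] by auto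
  show False
    by (rule no_proper[OF VA(1) h2 h1 VA(2) _ _ xy(1) h3 refl c1 connA[OF T2(1,2) a2] ac1 h4]) auto
qed

lemma SCC:
  assumes d: "T1 \<inter> T2 = {}" "T1 \<subseteq> E" "T2 \<subseteq> E"
    and e: "e1 \<in> T1" "h e1 = {x,y}" "e2 \<in> T2" "h e2 = {x,y}"
  shows False
proof -
  obtain a where a: "a \<in> A" using AB(3) by auto
  have n: "{x,y} \<noteq> V" using a Vdec(2,3,6) by auto
  have ne: "e1 \<noteq> e2" using d e by auto
  have h1: "\<forall>ea\<in>{e1} \<union> {e2}. h ea \<subseteq> {x,y}" using e by auto
  have h2: "{e1} \<union> {e2} \<subseteq> E" using d e by auto
  have h0: "{x,y} \<subseteq> V" using xy by auto
  have h3: "{e1} \<inter> {e2} = {}" using ne by auto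
  show False
    by (rule no_proper[OF h0 h2 h1 n _ _ xy(1) h3 refl single_edge(1)[of h e1 x y, OF e(2) xy(1)]
        single_edge(1)[of h e2 x y, OF e(4) xy(1)] single_edge(2)[of h e1 x y, OF e(2) xy(1)]
        single_edge(2)[of h e2 x y, OF e(4) xy(1)]]) auto
qed

end


context cut_setup
begin

lemma graph_side: "graph (A \<union> {x,y}) (insert None (Some ` side E h x y A)) (hx x y h)"
proof -
  have f1: "finite (A \<union> {x,y})" using finite_subset[OF VA(1) finV(1)] .
  have f2: "finite (insert None (Some ` side E h x y A))" using finite_subset[OF sideE(1) finV(2)] by simp
  have f3: "\<forall>e\<in>insert None (Some ` side E h x y A). hx x y h e \<subseteq> A \<union> {x,y} \<and> card (hx x y h e) = 2"
  proof
    fix e assume e: "e \<in> insert None (Some ` side E h x y A)"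
    show "hx x y h e \<subseteq> A \<union> {x,y} \<and> card (hx x y h e) = 2"
    proof (cases e)
      case None then show ?thesis using xy(1) by simp
    next
      case (Some f)
      then have f: "f \<in> side E h x y A" using e by auto
      then have "f \<in> E" "h f \<subseteq> A \<union> {x,y}" unfolding side_def by auto
      then show ?thesis using Some eV(2) by simp
    qed
  qed
  show ?thesis unfolding graph_def using f1 f2 f3 by blast
qed

lemma simple_side: "simple_graph (A \<union> {x,y}) (insert None (Some ` side E h x y A)) (hx x y h)"
  unfolding simple_graph_def
proof (intro conjI graph_side inj_onI)
  fix a b assume a: "a \<in> insert None (Some ` side E h x y A)" and b: "b \<in> insert None (Some ` side E h x y A)"
    and eq: "hx x y h a = hx x y h b"
  have nxy: "\<And>f. f \<in> side E h x y A \<Longrightarrow> h f \<noteq> {x,y}" unfolding side_def by auto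
  show "a = b"
  proof (cases a)
    case None
    show ?thesis
    proof (cases b)
      case None then show ?thesis using \<open>a = None\<close> by simp
    next
      case (Some g) then show ?thesis using \<open>a = None\<close> eq b nxy by auto
    qed
  next
    case (Some f)
    show ?thesis
    proof (cases b)
      case None then show ?thesis using \<open>a = Some f\<close> eq a nxy by force
    next
      case (Some g)
      have "f \<in> E" "g \<in> E" using a b \<open>a = Some f\<close> Some sideE(1) by auto
      moreover have "h f = h g" using eq \<open>a = Some f\<close> Some by simp
      ultimately show ?thesis using simpleG \<open>a = Some f\<close> Some by (simp add: inj_on_def)
    qed
  qed
qed

lemma bisp_side:
  assumes T: "T \<subseteq> E" "connected_graph V T h" "acyclic_graph T h"
    and T': "T' \<subseteq> E" "connected_graph V T' h" "acyclic_graph T' h"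
    and d: "T \<inter> T' = {}" "T \<union> T' = E"
    and a: "(x,y) \<in> (adj_rel (T \<inter> side E h x y A) h)\<^sup>*"
    and na: "(x,y) \<notin> (adj_rel (T' \<inter> side E h x y A) h)\<^sup>*"
    and b: "(x,y) \<in> (adj_rel (T' \<inter> side E h x y B) h)\<^sup>*"
  shows "bispanning (A \<union> {x,y}) (insert None (Some ` side E h x y A)) (hx x y h)"
proof -
  let ?sA = "side E h x y A"
  let ?F1 = "Some ` (T \<inter> ?sA)" and ?F2 = "insert None (Some ` (T' \<inter> ?sA))"
  have u: "?F1 \<union> ?F2 = insert None (Some ` ?sA)" using d(2) sideE(1) by auto
  have i: "?F1 \<inter> ?F2 = {}" using d(1) by auto
  have c1: "connected_graph (A \<union> {x,y}) ?F1 (hx x y h)"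
    using connA[OF T(1,2) a] by (simp add: connected_graph_def adj_Some)
  have ac1: "acyclic_graph ?F1 (hx x y h)"
    by (rule acyclic_Some[OF acyclic_mono[OF T(3)]]) auto
  let ?R = "adj_rel (T' \<inter> ?sA) h"
  have R2: "adj_rel ?F2 (hx x y h) = ?R \<union> {(x,y),(y,x)}" unfolding adj_None adj_Some ..
  have c2: "connected_graph (A \<union> {x,y}) ?F2 (hx x y h)"
  proof (rule hub_conn[where x=x and y=y])
    show "(x,y) \<in> (adj_rel ?F2 (hx x y h))\<^sup>*" unfolding R2 by (rule r_into_rtrancl) simp
    have m: "?R\<^sup>* \<subseteq> (adj_rel ?F2 (hx x y h))\<^sup>*" unfolding R2 by (rule rtrancl_mono) blast
    show "\<forall>v\<in>A \<union> {x, y}. (v, x) \<in> (adj_rel ?F2 (hx x y h))\<^sup>* \<or> (v, y) \<in> (adj_rel ?F2 (hx x y h))\<^sup>*"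
      using P1[OF T'(1,2)] m by blast
  qed
  have ac2: "acyclic_graph ?F2 (hx x y h)"
    unfolding acyclic_graph_def
  proof (intro ballI allI impI)
    fix e u v assume e: "e \<in> ?F2" and uv: "hx x y h e = {u,v}"
    show "(u,v) \<notin> (adj_rel (?F2 - {e}) (hx x y h))\<^sup>*"
    proof (cases e)
      case None
      then have eq: "?F2 - {e} = Some ` (T' \<inter> ?sA)" by auto
      have "{u,v} = {x,y}" using uv None by simp
      then have "(u,v) = (x,y) \<or> (u,v) = (y,x)" by (auto simp: doubleton_eq_iff)
      then show ?thesis using na rtr_sym[of y x "T' \<inter> ?sA" h] unfolding eq adj_Some by auto
    next
      case (Some f)
      then have f: "f \<in> T' \<inter> ?sA" using e by auto
      have huv: "h f = {u,v}" using uv Some by simp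
      have eq: "?F2 - {e} = insert None (Some ` (T' \<inter> ?sA - {f}))" using Some by auto
      have R: "adj_rel (?F2 - {e}) (hx x y h) = adj_rel (T' \<inter> ?sA - {f}) h \<union> {(x,y),(y,x)}"
        unfolding eq adj_None adj_Some ..
      show ?thesis
      proof
        assume "(u,v) \<in> (adj_rel (?F2 - {e}) (hx x y h))\<^sup>*"
        then have "(u,v) \<in> (adj_rel (T' \<inter> ?sA - {f}) h \<union> {(x,y),(y,x)})\<^sup>*" using R by simp
        note sp = split_lemma[OF adj_sym this]
        have sub: "T' \<inter> ?sA - {f} \<subseteq> T' - {f}" by auto
        have subB: "T' \<inter> side E h x y B \<subseteq> T' - {f}" using f sideAB by auto
        have xyT: "(x,y) \<in> (adj_rel (T' - {f}) h)\<^sup>*" using rtr_mono[OF subB b] .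
        have yxT: "(y,x) \<in> (adj_rel (T' - {f}) h)\<^sup>*" using rtr_sym[OF xyT] .
        have "(u,v) \<in> (adj_rel (T' - {f}) h)\<^sup>*"
          using sp
        proof (elim disjE conjE)
          assume "(u,v) \<in> (adj_rel (T' \<inter> ?sA - {f}) h)\<^sup>*" then show ?thesis by (rule rtr_mono[OF sub])
        next
          assume 1: "(u,x) \<in> (adj_rel (T' \<inter> ?sA - {f}) h)\<^sup>*" and 2: "(y,v) \<in> (adj_rel (T' \<inter> ?sA - {f}) h)\<^sup>*"
          show ?thesis using rtr_mono[OF sub 1] rtr_mono[OF sub 2] xyT by (meson rtrancl_trans)
        next
          assume 1: "(u,y) \<in> (adj_rel (T' \<inter> ?sA - {f}) h)\<^sup>*" and 2: "(x,v) \<in> (adj_rel (T' \<inter> ?sA - {f}) h)\<^sup>*"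
          show ?thesis using rtr_mono[OF sub 1] rtr_mono[OF sub 2] yxT by (meson rtrancl_trans)
        qed
        then show False using T'(3) f huv unfolding acyclic_graph_def by blast
      qed
    qed
  qed
  have s1: "spanning_tree (A \<union> {x,y}) (insert None (Some ` ?sA)) (hx x y h) ?F1"
    unfolding spanning_tree_def using u c1 ac1 by blast
  have s2: "spanning_tree (A \<union> {x,y}) (insert None (Some ` ?sA)) (hx x y h) ?F2"
    unfolding spanning_tree_def using u c2 ac2 by blast
  show ?thesis unfolding bispanning_def using graph_side i u s1 s2 by blast
qed

end


lemma combined:
  assumes cs: "cut_setup V E h x y A B"
  shows "(\<forall>e\<in>E. h e \<noteq> {x,y}) \<and> bispanning (A \<union> {x,y}) (insert None (Some ` side E h x y A)) (hx x y h)
      \<and> bispanning (B \<union> {x,y}) (insert None (Some ` side E h x y B)) (hx x y h)"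
proof -
  interpret a: cut_setup V E h x y A B by (rule cs)
  interpret b: cut_setup V E h x y B A
    using cs unfolding cut_setup_def by (auto simp: Un_commute Int_commute)
  obtain T1 T2 where T: "T1 \<inter> T2 = {}" "T1 \<union> T2 = E" "spanning_tree V E h T1" "spanning_tree V E h T2"
    using a.at unfolding atomic_def bispanning_def by blast
  have t1: "T1 \<subseteq> E" "connected_graph V T1 h" "acyclic_graph T1 h" using T(3) unfolding spanning_tree_def by auto
  have t2: "T2 \<subseteq> E" "connected_graph V T2 h" "acyclic_graph T2 h" using T(4) unfolding spanning_tree_def by auto
  have T': "T2 \<inter> T1 = {}" "T2 \<union> T1 = E" using T(1,2) by auto
  have nc1: "\<not>(\<exists>e\<in>T1. h e = {x,y})"
  proof
    assume "\<exists>e\<in>T1. h e = {x,y}" then obtain e where e: "e \<in> T1" "h e = {x,y}" by blast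
    from a.P2[OF t2(1,2)] show False
    proof (elim disjE)
      assume a2: "(x, y) \<in> (adj_rel (T2 \<inter> side E h x y A) h)\<^sup>*"
      show False by (rule a.SCA[OF t1 t2 T(1) e a2])
    next
      assume b2: "(x, y) \<in> (adj_rel (T2 \<inter> side E h x y B) h)\<^sup>*"
      show False by (rule b.SCA[OF t1 t2 T(1) e b2])
    next
      assume "\<exists>e\<in>T2. h e = {x,y}" then obtain e2 where e2: "e2 \<in> T2" "h e2 = {x,y}" by blast
      show False by (rule a.SCC[OF T(1) t1(1) t2(1) e e2])
    qed
  qed
  have nc2: "\<not>(\<exists>e\<in>T2. h e = {x,y})"
  proof
    assume "\<exists>e\<in>T2. h e = {x,y}" then obtain e where e: "e \<in> T2" "h e = {x,y}" by blast
    from a.P2[OF t1(1,2)] show False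
    proof (elim disjE)
      assume a2: "(x, y) \<in> (adj_rel (T1 \<inter> side E h x y A) h)\<^sup>*"
      show False by (rule a.SCA[OF t2 t1 T'(1) e a2])
    next
      assume b2: "(x, y) \<in> (adj_rel (T1 \<inter> side E h x y B) h)\<^sup>*"
      show False by (rule b.SCA[OF t2 t1 T'(1) e b2])
    next
      assume "\<exists>e\<in>T1. h e = {x,y}" then obtain e2 where e2: "e2 \<in> T1" "h e2 = {x,y}" by blast
      show False by (rule a.SCC[OF T'(1) t2(1) t1(1) e e2])
    qed
  qed
  have noX: "\<forall>e\<in>E. h e \<noteq> {x,y}" using nc1 nc2 T(2) by blast
  have p1: "(x, y) \<in> (adj_rel (T1 \<inter> side E h x y A) h)\<^sup>* \<or> (x, y) \<in> (adj_rel (T1 \<inter> side E h x y B) h)\<^sup>*"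
    using a.P2[OF t1(1,2)] nc1 by blast
  have p2: "(x, y) \<in> (adj_rel (T2 \<inter> side E h x y A) h)\<^sup>* \<or> (x, y) \<in> (adj_rel (T2 \<inter> side E h x y B) h)\<^sup>*"
    using a.P2[OF t2(1,2)] nc2 by blast
  have x1: "\<not>((x, y) \<in> (adj_rel (T1 \<inter> side E h x y A) h)\<^sup>* \<and> (x, y) \<in> (adj_rel (T1 \<inter> side E h x y B) h)\<^sup>*)"
    using a.exAB[OF t1(1,3)] by blast
  have x2: "\<not>((x, y) \<in> (adj_rel (T2 \<inter> side E h x y A) h)\<^sup>* \<and> (x, y) \<in> (adj_rel (T2 \<inter> side E h x y B) h)\<^sup>*)"
    using a.exAB[OF t2(1,3)] by blast
  have x3: "\<not>((x, y) \<in> (adj_rel (T1 \<inter> side E h x y A) h)\<^sup>* \<and> (x, y) \<in> (adj_rel (T2 \<inter> side E h x y A) h)\<^sup>*)"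
    using a.SAA[OF t1 t2 T(1)] by blast
  have x4: "\<not>((x, y) \<in> (adj_rel (T1 \<inter> side E h x y B) h)\<^sup>* \<and> (x, y) \<in> (adj_rel (T2 \<inter> side E h x y B) h)\<^sup>*)"
    using b.SAA[OF t1 t2 T(1)] by blast
  show ?thesis
  proof (cases "(x, y) \<in> (adj_rel (T1 \<inter> side E h x y A) h)\<^sup>*")
    case True
    then have n2: "(x, y) \<notin> (adj_rel (T2 \<inter> side E h x y A) h)\<^sup>*" using x3 by blast
    then have b2: "(x, y) \<in> (adj_rel (T2 \<inter> side E h x y B) h)\<^sup>*" using p2 by blast
    have nb1: "(x, y) \<notin> (adj_rel (T1 \<inter> side E h x y B) h)\<^sup>*" using x1 True by blast
    show ?thesis using noX a.bisp_side[OF t1 t2 T(1,2) True n2 b2] b.bisp_side[OF t2 t1 T' b2 nb1 True] by blast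
  next
    case False
    then have b1: "(x, y) \<in> (adj_rel (T1 \<inter> side E h x y B) h)\<^sup>*" using p1 by blast
    then have nb2: "(x, y) \<notin> (adj_rel (T2 \<inter> side E h x y B) h)\<^sup>*" using x4 by blast
    then have a2: "(x, y) \<in> (adj_rel (T2 \<inter> side E h x y A) h)\<^sup>*" using p2 by blast
    show ?thesis using noX a.bisp_side[OF t2 t1 T' a2 False b1] b.bisp_side[OF t1 t2 T(1,2) b1 nb2 a2] by blast
  qed
qed

lemma iso_rtr1:
  assumes hh: "\<forall>e\<in>F. h' (\<psi> e) = \<phi> ` h e" and p: "(u,v) \<in> (adj_rel F h)\<^sup>*"
  shows "(\<phi> u, \<phi> v) \<in> (adj_rel (\<psi> ` F) h')\<^sup>*"
  using p
proof (induction rule: rtrancl_induct)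
  case base then show ?case by simp
next
  case (step w w')
  then obtain e where e: "e \<in> F" "h e = {w,w'}" by (auto simp: adj_rel_def)
  then have "h' (\<psi> e) = {\<phi> w, \<phi> w'}" using hh by auto
  then have "(\<phi> w, \<phi> w') \<in> adj_rel (\<psi> ` F) h'" using e unfolding adj_rel_def by auto
  then show ?case using step.IH by auto
qed

lemma iso_rtr2:
  assumes G: "graph V F h" and inj: "inj_on \<phi> V" and hh: "\<forall>e\<in>F. h' (\<psi> e) = \<phi> ` h e"
    and p: "(a,b) \<in> (adj_rel (\<psi> ` F) h')\<^sup>*" and u: "u \<in> V" "a = \<phi> u"
  shows "\<exists>w\<in>V. b = \<phi> w \<and> (u,w) \<in> (adj_rel F h)\<^sup>*"
  using p
proof (induction rule: rtrancl_induct)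
  case base then show ?case using u by auto
next
  case (step b c)
  then obtain w where w: "w \<in> V" "b = \<phi> w" "(u,w) \<in> (adj_rel F h)\<^sup>*" by auto
  obtain e where e: "e \<in> F" "h' (\<psi> e) = {b,c}" using step.hyps(2) by (auto simp: adj_rel_def)
  have heV: "h e \<subseteq> V" using G e(1) unfolding graph_def by auto
  have im: "\<phi> ` h e = {b,c}" using hh e by auto
  then obtain w' where w': "w' \<in> h e" "c = \<phi> w'" by (metis imageE insertI1 insert_commute)
  obtain z where z: "z \<in> h e" "\<phi> z = \<phi> w" using im w(2) by (metis imageE insertI1)
  have "z = w" using inj z heV w(1) by (meson inj_onD subsetD)
  have "h e \<subseteq> {w,w'}"
  proof
    fix t assume t: "t \<in> h e"
    then have "\<phi> t \<in> {\<phi> w, \<phi> w'}" using im w(2) w'(2) by auto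
    then show "t \<in> {w,w'}" using inj t heV w(1) w'(1) by (auto dest: inj_onD)
  qed
  then have "h e = {w,w'}" using z \<open>z = w\<close> w'(1) by auto
  then have "(w,w') \<in> adj_rel F h" using e(1) unfolding adj_rel_def by auto
  then have "(u,w') \<in> (adj_rel F h)\<^sup>*" by (rule rtrancl_into_rtrancl[OF w(3)])
  then show ?case using w'(1,2) heV by blast
qed

lemma iso_rtr:
  assumes G: "graph V F h" and inj: "inj_on \<phi> V" and hh: "\<forall>e\<in>F. h' (\<psi> e) = \<phi> ` h e"
    and u: "u \<in> V" "v \<in> V"
  shows "(\<phi> u, \<phi> v) \<in> (adj_rel (\<psi> ` F) h')\<^sup>* \<longleftrightarrow> (u,v) \<in> (adj_rel F h)\<^sup>*"
proof
  assume "(\<phi> u, \<phi> v) \<in> (adj_rel (\<psi> ` F) h')\<^sup>*"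
  from iso_rtr2[where h'=h' and \<psi>=\<psi> and \<phi>=\<phi>, OF G inj hh this u(1) refl] obtain w where "w \<in> V" "\<phi> v = \<phi> w" "(u,w) \<in> (adj_rel F h)\<^sup>*" by blast
  then show "(u,v) \<in> (adj_rel F h)\<^sup>*" using inj u(2) by (metis inj_onD)
next
  assume "(u,v) \<in> (adj_rel F h)\<^sup>*"
  then show "(\<phi> u, \<phi> v) \<in> (adj_rel (\<psi> ` F) h')\<^sup>*" by (rule iso_rtr1[where h'=h' and \<psi>=\<psi> and \<phi>=\<phi>, OF hh])
qed

lemma graph_sub: "graph V E h \<Longrightarrow> T \<subseteq> E \<Longrightarrow> graph V T h"
  unfolding graph_def by (auto intro: finite_subset)

lemma iso_graph:
  assumes G: "graph V E h" and inj: "inj_on \<phi> V" and hh: "\<forall>e\<in>E. h' (\<psi> e) = \<phi> ` h e"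
  shows "graph (\<phi> ` V) (\<psi> ` E) h'"
  unfolding graph_def
proof (intro conjI ballI)
  show "finite (\<phi> ` V)" "finite (\<psi> ` E)" using G unfolding graph_def by auto
  fix e' assume "e' \<in> \<psi> ` E"
  then obtain e where e: "e \<in> E" "e' = \<psi> e" by auto
  have "h e \<subseteq> V" "card (h e) = 2" using G e(1) unfolding graph_def by auto
  then show "h' e' \<subseteq> \<phi> ` V" "card (h' e') = 2" using hh e inj
    by (auto simp: card_image inj_on_subset)
qed

lemma iso_conn:
  assumes G: "graph V T h" and inj: "inj_on \<phi> V" and hh: "\<forall>e\<in>T. h' (\<psi> e) = \<phi> ` h e"
    and c: "connected_graph V T h"
  shows "connected_graph (\<phi> ` V) (\<psi> ` T) h'"
  unfolding connected_graph_def
proof (intro ballI)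
  fix a b assume "a \<in> \<phi> ` V" "b \<in> \<phi> ` V"
  then obtain u v where uv: "u \<in> V" "v \<in> V" "a = \<phi> u" "b = \<phi> v" by auto
  have "(u,v) \<in> (adj_rel T h)\<^sup>*" using c uv(1,2) unfolding connected_graph_def by blast
  then show "(a,b) \<in> (adj_rel (\<psi> ` T) h')\<^sup>*" using iso_rtr[where h'=h' and \<psi>=\<psi> and \<phi>=\<phi>, OF G inj hh uv(1,2)] uv(3,4) by simp
qed

lemma iso_acyc:
  assumes G: "graph V T h" and inj: "inj_on \<phi> V" "inj_on \<psi> T" and hh: "\<forall>e\<in>T. h' (\<psi> e) = \<phi> ` h e"
    and c: "acyclic_graph T h"
  shows "acyclic_graph (\<psi> ` T) h'"
  unfolding acyclic_graph_def
proof (intro ballI allI impI)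
  fix e' a b assume e': "e' \<in> \<psi> ` T" and ab: "h' e' = {a,b}"
  then obtain e where e: "e \<in> T" "e' = \<psi> e" by auto
  have heV: "h e \<subseteq> V" "card (h e) = 2" using G e(1) unfolding graph_def by auto
  then obtain u v where uv: "h e = {u,v}" by (meson card_2_iff)
  have im: "{\<phi> u, \<phi> v} = {a,b}" using hh e ab uv by auto
  have eq: "\<psi> ` T - {e'} = \<psi> ` (T - {e})" using inj(2) e by (auto simp: inj_on_def)
  have G': "graph V (T - {e}) h" using graph_sub[OF G] by auto
  have hh': "\<forall>f\<in>T - {e}. h' (\<psi> f) = \<phi> ` h f" using hh by auto
  have uvV: "u \<in> V" "v \<in> V" using heV uv by auto
  have n1: "(u,v) \<notin> (adj_rel (T - {e}) h)\<^sup>*" using c e uv unfolding acyclic_graph_def by blast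
  have n2: "(v,u) \<notin> (adj_rel (T - {e}) h)\<^sup>*" using c e uv unfolding acyclic_graph_def by (metis insert_commute)
  from im have "(a,b) = (\<phi> u, \<phi> v) \<or> (a,b) = (\<phi> v, \<phi> u)" by (auto simp: doubleton_eq_iff)
  then show "(a,b) \<notin> (adj_rel (\<psi> ` T - {e'}) h')\<^sup>*"
  proof
    assume "(a,b) = (\<phi> u, \<phi> v)"
    then show ?thesis unfolding eq using iso_rtr[where h'=h' and \<psi>=\<psi> and \<phi>=\<phi>, OF G' inj(1) hh' uvV] n1 by simp
  next
    assume "(a,b) = (\<phi> v, \<phi> u)"
    then show ?thesis unfolding eq using iso_rtr[where h'=h' and \<psi>=\<psi> and \<phi>=\<phi>, OF G' inj(1) hh' uvV(2,1)] n2 by simp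
  qed
qed

lemma iso_bisp:
  assumes B: "bispanning V E h" and inj: "inj_on \<phi> V" "inj_on \<psi> E" and hh: "\<forall>e\<in>E. h' (\<psi> e) = \<phi> ` h e"
  shows "bispanning (\<phi> ` V) (\<psi> ` E) h'"
proof -
  have G: "graph V E h" using B unfolding bispanning_def by auto
  obtain T1 T2 where T: "T1 \<inter> T2 = {}" "T1 \<union> T2 = E" "spanning_tree V E h T1" "spanning_tree V E h T2"
    using B unfolding bispanning_def by blast
  have st: "spanning_tree (\<phi> ` V) (\<psi> ` E) h' (\<psi> ` T)" if "spanning_tree V E h T" for T
  proof -
    have t: "T \<subseteq> E" "connected_graph V T h" "acyclic_graph T h" using that unfolding spanning_tree_def by auto
    have G': "graph V T h" using graph_sub[OF G t(1)] .
    have hh': "\<forall>e\<in>T. h' (\<psi> e) = \<phi> ` h e" using hh t(1) by auto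
    have ij: "inj_on \<psi> T" using inj(2) t(1) inj_on_subset by auto
    have sb: "\<psi> ` T \<subseteq> \<psi> ` E" using t(1) by (rule image_mono)
    show ?thesis unfolding spanning_tree_def
      using sb iso_conn[where h'=h' and \<psi>=\<psi> and \<phi>=\<phi>, OF G' inj(1) hh' t(2)] iso_acyc[where h'=h' and \<psi>=\<psi> and \<phi>=\<phi>, OF G' inj(1) ij hh' t(3)] by blast
  qed
  have "\<psi> ` T1 \<inter> \<psi> ` T2 = \<psi> ` (T1 \<inter> T2)" using T(2) inj(2) by (intro inj_on_image_Int[symmetric]) auto
  then have "\<psi> ` T1 \<inter> \<psi> ` T2 = {}" using T(1) by simp
  moreover have "\<psi> ` T1 \<union> \<psi> ` T2 = \<psi> ` E" using T(2) by auto
  moreover note s1 = st[OF T(3)] and s2 = st[OF T(4)]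
  moreover note gg = iso_graph[where h'=h' and \<psi>=\<psi> and \<phi>=\<phi>, OF G inj(1) hh]
  ultimately show ?thesis unfolding bispanning_def
    by (intro conjI exI[of _ "\<psi> ` T1"] exI[of _ "\<psi> ` T2"]) simp_all
qed

lemma iso_simple:
  assumes B: "simple_graph V E h" and inj: "inj_on \<phi> V" "inj_on \<psi> E" and hh: "\<forall>e\<in>E. h' (\<psi> e) = \<phi> ` h e"
  shows "simple_graph (\<phi> ` V) (\<psi> ` E) h'"
  unfolding simple_graph_def
proof (intro conjI inj_onI)
  have G: "graph V E h" using B unfolding simple_graph_def by auto
  show "graph (\<phi> ` V) (\<psi> ` E) h'" using iso_graph[where h'=h' and \<psi>=\<psi> and \<phi>=\<phi>, OF G inj(1) hh] .
  fix a b assume a: "a \<in> \<psi> ` E" and b: "b \<in> \<psi> ` E" and eq: "h' a = h' b"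
  then obtain e f where ef: "e \<in> E" "f \<in> E" "a = \<psi> e" "b = \<psi> f" by auto
  have "\<phi> ` h e = \<phi> ` h f" using eq ef hh by auto
  moreover have "h e \<subseteq> V" "h f \<subseteq> V" using G ef unfolding graph_def by auto
  ultimately have "h e = h f" using inj(1) by (simp add: inj_on_image_eq_iff)
  moreover have "inj_on h E" using B unfolding simple_graph_def by blast
  ultimately have "e = f" using ef(1,2) by (meson inj_onD)
  then show "a = b" using ef by simp
qed



lemma nc_pos: "finite W \<Longrightarrow> W \<noteq> {} \<Longrightarrow> num_components W F h \<ge> 1"
  unfolding num_components_def
proof -
  assume "finite W" "W \<noteq> {}"
  have eq: "{{w\<in>W. (v, w) \<in> (adj_rel F h)\<^sup>*} | v. v \<in> W} = (\<lambda>v. {w\<in>W. (v, w) \<in> (adj_rel F h)\<^sup>*}) ` W" by auto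
  show "1 \<le> card {{w\<in>W. (v, w) \<in> (adj_rel F h)\<^sup>*} | v. v \<in> W}"
    unfolding eq using \<open>finite W\<close> \<open>W \<noteq> {}\<close> by (simp add: Suc_le_eq card_gt_0_iff)
qed

lemma nc_conn: "connected_graph W F h \<Longrightarrow> num_components W F h \<le> 1"
  unfolding num_components_def connected_graph_def
proof -
  assume c: "\<forall>u\<in>W. \<forall>v\<in>W. (u, v) \<in> (adj_rel F h)\<^sup>*"
  have "{{w\<in>W. (v, w) \<in> (adj_rel F h)\<^sup>*} | v. v \<in> W} \<subseteq> {W}" using c by auto
  from card_mono[OF _ this] show "card {{w\<in>W. (v, w) \<in> (adj_rel F h)\<^sup>*} | v. v \<in> W} \<le> 1" by simp
qed

lemma nc_empty: "num_components {} F h = 0"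
  unfolding num_components_def by simp

lemma setup_exists:
  fixes V :: "'a set" and E :: "'e set" and h :: "'e \<Rightarrow> 'a set" and x y :: 'a
  assumes G: "graph V E h"
    and at: "atomic V E h"
    and vc: "vertex_connectivity V E h = 2"
    and cut0: "vertex_cut V E h {x, y}"
  shows "\<exists>A B. cut_setup V E h x y A B"
proof -
  have finV: "finite V" "finite E" using G unfolding graph_def by auto
  define D where "D = del_edges {x,y} E h"
  have cut: "{x,y} \<subseteq> V" "num_components (V - {x,y}) D h > num_components V E h"
    using cut0 unfolding vertex_cut_def D_def by auto
  have "V - {x,y} \<noteq> {}"
  proof
    assume e0: "V - {x,y} = {}"
    have "num_components (V - {x,y}) D h = 0" unfolding e0 by (rule nc_empty)
    then show False using cut(2) by simp
  qed
  then have Vne: "V \<noteq> {}" by auto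
  have nc1: "num_components V E h \<ge> 1" using nc_pos[OF finV(1) Vne] .
  have ge2: "num_components (V - {x,y}) D h \<ge> 2" using cut(2) nc1 by auto
  have kc: "k_connected 2 V E h"
  proof -
    have "k_connected (Greatest (\<lambda>k. k_connected k V E h)) V E h"
    proof (rule GreatestI_ex_nat)
      show "\<exists>k. k_connected k V E h"
        using Vne finV(1) by (intro exI[of _ 0]) (auto simp: k_connected_def card_gt_0_iff)
      show "\<And>k. k_connected k V E h \<Longrightarrow> k \<le> card V" unfolding k_connected_def by auto
    qed
    then show ?thesis using vc unfolding vertex_connectivity_def by simp
  qed
  have xy: "x \<noteq> y"
  proof
    assume "x = y"
    then have "{x,y} \<subseteq> V" "card {x,y} < 2" using cut(1) by auto
    then have "connected_graph (V - {x,y}) D h" using kc unfolding k_connected_def D_def by blast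
    then show False using nc_conn ge2 by fastforce
  qed
  obtain a b where ab: "a \<in> V - {x,y}" "b \<in> V - {x,y}" "(a,b) \<notin> (adj_rel D h)\<^sup>*"
  proof -
    have "\<not> connected_graph (V - {x,y}) D h" using nc_conn ge2 by fastforce
    then show ?thesis using that unfolding connected_graph_def by blast
  qed
  define A where "A = {w \<in> V - {x,y}. (a,w) \<in> (adj_rel D h)\<^sup>*}"
  define B where "B = V - {x,y} - A"
  have cs: "cut_setup V E h x y A B"
    unfolding cut_setup_def
  proof (intro conjI)
    show "graph V E h" "atomic V E h" "x \<noteq> y" using G at xy by auto
    show "x \<in> V" "y \<in> V" using cut(1) by auto
    show "A \<union> B = V - {x, y}" "A \<inter> B = {}" unfolding A_def B_def by auto
    show "A \<noteq> {}" using ab(1) unfolding A_def by auto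
    show "B \<noteq> {}" using ab unfolding A_def B_def by auto
    show "\<forall>e\<in>E. h e \<inter> A = {} \<or> h e \<inter> B = {}"
    proof (rule ballI, rule ccontr)
      fix e assume e: "e \<in> E" and "\<not> (h e \<inter> A = {} \<or> h e \<inter> B = {})"
      then obtain u w where uw: "u \<in> h e" "u \<in> A" "w \<in> h e" "w \<in> B" by auto
      have "u \<noteq> w" using uw unfolding B_def by auto
      have c2: "card (h e) = 2" using G e unfolding graph_def by auto
      have "h e = {u,w}"
      proof -
        have "{u,w} \<subseteq> h e" using uw by auto
        moreover have "card {u,w} = card (h e)" using c2 \<open>u \<noteq> w\<close> by auto
        moreover have "finite (h e)" using c2 by (metis card.infinite zero_neq_numeral)
        ultimately show ?thesis by (metis card_subset_eq)
      qed
      moreover have "u \<notin> {x,y}" "w \<notin> {x,y}" using uw unfolding A_def B_def by auto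
      ultimately have "e \<in> D" using e unfolding D_def del_edges_def by auto
      then have "(u,w) \<in> adj_rel D h" using \<open>h e = {u,w}\<close> unfolding adj_rel_def by auto
      then have "(a,w) \<in> (adj_rel D h)\<^sup>*" using uw(2) unfolding A_def by auto
      then show False using uw(4) unfolding A_def B_def by auto
    qed
  qed
  then show ?thesis by blast
qed



context cut_setup begin
lemma partition:
  assumes noX: "\<forall>e\<in>E. h e \<noteq> {x,y}"
  shows "E = side E h x y A \<union> side E h x y B"
proof
  show "side E h x y A \<union> side E h x y B \<subseteq> E" using sideE by auto
  show "E \<subseteq> side E h x y A \<union> side E h x y B"
  proof
    fix e assume e: "e \<in> E"
    show "e \<in> side E h x y A \<union> side E h x y B"
    proof (cases "h e \<inter> A \<noteq> {}")
      case True then show ?thesis using toA[OF e] by auto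
    next
      case nA: False
      show ?thesis
      proof (cases "h e \<inter> B \<noteq> {}")
        case True then show ?thesis using toB[OF e] by auto
      next
        case False
        have "h e \<subseteq> V" using eV(1)[OF e] .
        then have "h e \<subseteq> {x,y}" using nA False Vdec(1) by blast
        moreover have "card (h e) = card {x,y}" using eV(2)[OF e] xy(1) by simp
        ultimately have "h e = {x,y}" by (intro card_subset_eq) auto
        then show ?thesis using noX e by auto
      qed
    qed
  qed
qed
end

lemma encode:
  assumes B: "bispanning W F k" and S: "simple_graph W F k" and i1: "inj_on \<phi> W" and i2: "inj_on \<psi> F"
  shows "bispanning (\<phi> ` W) (\<psi> ` F) (\<lambda>n. \<phi> ` k (inv_into F \<psi> n))"
    "simple_graph (\<phi> ` W) (\<psi> ` F) (\<lambda>n. \<phi> ` k (inv_into F \<psi> n))"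
    "\<forall>e\<in>F. (\<lambda>n. \<phi> ` k (inv_into F \<psi> n)) (\<psi> e) = \<phi> ` k e"
proof -
  show hh: "\<forall>e\<in>F. (\<lambda>n. \<phi> ` k (inv_into F \<psi> n)) (\<psi> e) = \<phi> ` k e" using i2 by simp
  show "bispanning (\<phi> ` W) (\<psi> ` F) (\<lambda>n. \<phi> ` k (inv_into F \<psi> n))"
    by (rule iso_bisp[where h'="\<lambda>n. \<phi> ` k (inv_into F \<psi> n)" and \<psi>=\<psi> and \<phi>=\<phi>, OF B i1 i2 hh])
  show "simple_graph (\<phi> ` W) (\<psi> ` F) (\<lambda>n. \<phi> ` k (inv_into F \<psi> n))"
    by (rule iso_simple[where h'="\<lambda>n. \<phi> ` k (inv_into F \<psi> n)" and \<psi>=\<psi> and \<phi>=\<phi>, OF S i1 i2 hh])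
qed

lemma par: "2 * (a::nat) \<noteq> Suc (2 * b)" "2 * (a::nat) \<noteq> 2 * b + 1" by presburger+

lemma par_simps[simp]: "(2 * (a::nat) = Suc (2 * b)) = False" "(Suc (2 * b) = 2 * (a::nat)) = False" by presburger+

lemma divs: "(2 * k) div 2 = (k::nat)" "(2 * k + 1) div 2 = k" "Suc (2 * k) div 2 = k"
  "(2 * k + 2 - 2) div 2 = k" "(2 * k + 3 - 2) div 2 = k" by presburger+

lemma clique_phi:
  assumes f: "inj_on f V" and VA: "VA \<subseteq> V" "VB \<subseteq> V" and I: "VA \<inter> VB = {x,y}"
  shows "\<forall>u\<in>(\<lambda>v. 2 * f v) ` VA \<union> (\<lambda>v. 2 * f v + 1) ` VB. \<forall>w\<in>(\<lambda>v. 2 * f v) ` VA \<union> (\<lambda>v. 2 * f v + 1) ` VB.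
     (inv_into V f (u div 2) = inv_into V f (w div 2)) \<longleftrightarrow>
     (u = w \<or> (u \<in> {2 * f x, 2 * f y} \<and> w = Suc u) \<or> (w \<in> {2 * f x, 2 * f y} \<and> u = Suc w))"
proof (intro ballI)
  fix u w assume u: "u \<in> (\<lambda>v. 2 * f v) ` VA \<union> (\<lambda>v. 2 * f v + 1) ` VB"
    and w: "w \<in> (\<lambda>v. 2 * f v) ` VA \<union> (\<lambda>v. 2 * f v + 1) ` VB"
  have xyV: "x \<in> V" "y \<in> V" using I VA by auto
  have fx: "\<And>p q. p \<in> V \<Longrightarrow> q \<in> V \<Longrightarrow> f p = f q \<longleftrightarrow> p = q" using f by (meson inj_onD)
  have iv: "\<And>p. p \<in> V \<Longrightarrow> inv_into V f (f p) = p" using f by simp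
  have mem: "\<And>p. p \<in> V \<Longrightarrow> (2 * f p \<in> {2 * f x, 2 * f y}) \<longleftrightarrow> (p = x \<or> p = y)"
    using fx xyV by auto
  have memo: "\<And>p. 2 * f p + 1 \<notin> {2 * f x, 2 * f y}" by (metis par(1) Suc_eq_plus1 insertE empty_iff)
  from u consider (e) p where "p \<in> VA" "u = 2 * f p" | (od) p where "p \<in> VB" "u = 2 * f p + 1" by auto
  then show "(inv_into V f (u div 2) = inv_into V f (w div 2)) \<longleftrightarrow>
     (u = w \<or> (u \<in> {2 * f x, 2 * f y} \<and> w = Suc u) \<or> (w \<in> {2 * f x, 2 * f y} \<and> u = Suc w))"
  proof cases
    case e
    have pV: "p \<in> V" using e VA by auto
    from w consider (e') q where "q \<in> VA" "w = 2 * f q" | (od') q where "q \<in> VB" "w = 2 * f q + 1" by auto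
    then show ?thesis
    proof cases
      case e'
      have qV: "q \<in> V" using e' VA by auto
      show ?thesis using e e' pV qV iv fx par by (simp add: divs)
    next
      case od'
      have qV: "q \<in> V" using od' VA by auto
      have "(p = q) \<longleftrightarrow> ((p = x \<or> p = y) \<and> q = p)" using e(1) od'(1) I by blast
      then show ?thesis using e od' pV qV iv fx par mem[OF pV] memo by (auto simp: divs)
    qed
  next
    case od
    have pV: "p \<in> V" using od VA by auto
    from w consider (e') q where "q \<in> VA" "w = 2 * f q" | (od') q where "q \<in> VB" "w = 2 * f q + 1" by auto
    then show ?thesis
    proof cases
      case e'
      have qV: "q \<in> V" using e' VA by auto
      have "(p = q) \<longleftrightarrow> ((q = x \<or> q = y) \<and> q = p)" using e'(1) od(1) I by blast
      then show ?thesis using od e' pV qV iv fx par mem[OF qV] memo by (auto simp: divs)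
    next
      case od'
      have qV: "q \<in> V" using od' VA by auto
      show ?thesis using od od' pV qV iv fx par memo by (auto simp: divs)
    qed
  qed
qed



lemma image_id_on: "(\<forall>v\<in>S. k v = v) \<Longrightarrow> k ` S = S"
  by force

theorem mainTheorem10:
  fixes V :: "'a set" and E :: "'e set" and h :: "'e \<Rightarrow> 'a set" and x y :: 'a
  assumes "graph V E h"
    and "atomic V E h"
    and "vertex_connectivity V E h = 2"
    and "vertex_cut V E h {x, y}"
  shows "(\<forall>e\<in>E. h e \<noteq> {x, y}) \<and>
    (\<exists>(V1::nat set) (E1::nat set) h1 d1 (V2::nat set) (E2::nat set) h2 d2.
       simple_graph V1 E1 h1 \<and> bispanning V1 E1 h1 \<and>
       simple_graph V2 E2 h2 \<and> bispanning V2 E2 h2 \<and>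
       V1 \<inter> V2 = {} \<and> E1 \<inter> E2 = {} \<and> d1 \<in> E1 \<and> d2 \<in> E2 \<and>
       two_clique_sum V1 E1 h1 d1 V2 E2 h2 d2 V E h)"
proof -
  obtain A B where cs: "cut_setup V E h x y A B" using setup_exists[OF assms] by blast
  interpret a: cut_setup V E h x y A B by (rule cs)
  interpret b: cut_setup V E h x y B A using cs unfolding cut_setup_def by (auto simp: Un_commute Int_commute)
  define VA where "VA = A \<union> {x,y}"
  define VB where "VB = B \<union> {x,y}"
  define EA where "EA = insert None (Some ` side E h x y A)"
  define EB where "EB = insert None (Some ` side E h x y B)"
  have comb: "(\<forall>e\<in>E. h e \<noteq> {x,y})" "bispanning VA EA (hx x y h)" "bispanning VB EB (hx x y h)"
    using combined[OF cs] unfolding VA_def VB_def EA_def EB_def by auto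
  note noX = comb(1)
  have sA: "simple_graph VA EA (hx x y h)" unfolding VA_def EA_def by (rule a.simple_side)
  have sB: "simple_graph VB EB (hx x y h)" unfolding VB_def EB_def by (rule b.simple_side)
  have part: "E = side E h x y A \<union> side E h x y B" using a.partition[OF noX] .
  have dis: "side E h x y A \<inter> side E h x y B = {}" using a.sideAB .
  have sAE: "side E h x y A \<subseteq> E" "side E h x y B \<subseteq> E" using a.sideE by auto
  obtain f :: "'a \<Rightarrow> nat" where f: "inj_on f V" using finite_imp_inj_to_nat_seg[OF a.finV(1)] by blast
  obtain g :: "'e \<Rightarrow> nat" where g: "inj_on g E" using finite_imp_inj_to_nat_seg[OF a.finV(2)] by blast
  define \<phi>1 where "\<phi>1 = (\<lambda>v::'a. 2 * f v)"
  define \<phi>2 where "\<phi>2 = (\<lambda>v::'a. 2 * f v + 1)"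
  define \<psi>1 where "\<psi>1 = (\<lambda>z::'e option. case z of None \<Rightarrow> (0::nat) | Some e \<Rightarrow> 2 * g e + 2)"
  define \<psi>2 where "\<psi>2 = (\<lambda>z::'e option. case z of None \<Rightarrow> (1::nat) | Some e \<Rightarrow> 2 * g e + 3)"
  define h1 where "h1 = (\<lambda>n. \<phi>1 ` hx x y h (inv_into EA \<psi>1 n))"
  define h2 where "h2 = (\<lambda>n. \<phi>2 ` hx x y h (inv_into EB \<psi>2 n))"
  have VAV: "VA \<subseteq> V" "VB \<subseteq> V" unfolding VA_def VB_def by (rule a.VA(1), rule b.VA(1))
  have IAB: "VA \<inter> VB = {x,y}" using a.AB(2) unfolding VA_def VB_def by blast
  have UAB0: "VA \<union> VB = A \<union> B \<union> {x,y}" unfolding VA_def VB_def by blast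
  have UAB: "VA \<union> VB = V" unfolding UAB0 by (rule a.Vdec(1)[symmetric])
  have gE: "\<And>e e'. e \<in> E \<Longrightarrow> e' \<in> E \<Longrightarrow> g e = g e' \<longleftrightarrow> e = e'" using g by (meson inj_onD)
  have i1: "inj_on \<phi>1 VA" using inj_on_subset[OF f VAV(1)] unfolding \<phi>1_def inj_on_def by auto
  have i2: "inj_on \<phi>2 VB" using inj_on_subset[OF f VAV(2)] unfolding \<phi>2_def inj_on_def by auto
  have j1: "inj_on \<psi>1 EA"
  proof (rule inj_onI)
    fix o1 o2 assume o1: "o1 \<in> EA" and o2: "o2 \<in> EA" and eq: "\<psi>1 o1 = \<psi>1 o2"
    show "o1 = o2"
    proof (cases o1)
      case None then show ?thesis using eq unfolding \<psi>1_def by (cases o2) auto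
    next
      case (Some e1)
      show ?thesis
      proof (cases o2)
        case None then show ?thesis using eq Some unfolding \<psi>1_def by auto
      next
        case (Some e2)
        have "e1 \<in> E" "e2 \<in> E" using o1 o2 \<open>o1 = Some e1\<close> Some sAE unfolding EA_def by auto
        then show ?thesis using eq \<open>o1 = Some e1\<close> Some gE unfolding \<psi>1_def by auto
      qed
    qed
  qed
  have j2: "inj_on \<psi>2 EB"
  proof (rule inj_onI)
    fix o1 o2 assume o1: "o1 \<in> EB" and o2: "o2 \<in> EB" and eq: "\<psi>2 o1 = \<psi>2 o2"
    show "o1 = o2"
    proof (cases o1)
      case None then show ?thesis using eq unfolding \<psi>2_def by (cases o2) auto
    next
      case (Some e1)
      show ?thesis
      proof (cases o2)
        case None then show ?thesis using eq Some unfolding \<psi>2_def by auto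
      next
        case (Some e2)
        have "e1 \<in> E" "e2 \<in> E" using o1 o2 \<open>o1 = Some e1\<close> Some sAE unfolding EB_def by auto
        then show ?thesis using eq \<open>o1 = Some e1\<close> Some gE unfolding \<psi>2_def by auto
      qed
    qed
  qed
  note enc1 = encode[OF comb(2) sA i1 j1]
  note enc2 = encode[OF comb(3) sB i2 j2]
  have bis1: "bispanning (\<phi>1 ` VA) (\<psi>1 ` EA) h1" using enc1(1) unfolding h1_def .
  have sim1: "simple_graph (\<phi>1 ` VA) (\<psi>1 ` EA) h1" using enc1(2) unfolding h1_def .
  have hh1: "\<And>e. e \<in> EA \<Longrightarrow> h1 (\<psi>1 e) = \<phi>1 ` hx x y h e" using enc1(3) unfolding h1_def by auto
  have bis2: "bispanning (\<phi>2 ` VB) (\<psi>2 ` EB) h2" using enc2(1) unfolding h2_def .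
  have sim2: "simple_graph (\<phi>2 ` VB) (\<psi>2 ` EB) h2" using enc2(2) unfolding h2_def .
  have hh2: "\<And>e. e \<in> EB \<Longrightarrow> h2 (\<psi>2 e) = \<phi>2 ` hx x y h e" using enc2(3) unfolding h2_def by auto
  have h1d: "h1 0 = {2 * f x, 2 * f y}"
    using hh1[of None] unfolding EA_def \<psi>1_def \<phi>1_def by simp
  have h2d: "h2 1 = {2 * f x + 1, 2 * f y + 1}"
    using hh2[of None] unfolding EB_def \<psi>2_def \<phi>2_def by simp
  define \<Phi> where "\<Phi> = (\<lambda>n::nat. inv_into V f (n div 2))"
  define \<Psi> where "\<Psi> = (\<lambda>n::nat. inv_into E g ((n - 2) div 2))"
  have E1m: "\<psi>1 ` EA - {0} = (\<lambda>e. 2 * g e + 2) ` side E h x y A" unfolding EA_def \<psi>1_def image_insert image_image by auto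
  have E2m: "\<psi>2 ` EB - {1} = (\<lambda>e. 2 * g e + 3) ` side E h x y B" unfolding EB_def \<psi>2_def image_insert image_image by auto
  have \<Phi>1: "\<And>v. v \<in> V \<Longrightarrow> \<Phi> (2 * f v) = v" "\<And>v. v \<in> V \<Longrightarrow> \<Phi> (2 * f v + 1) = v"
    unfolding \<Phi>_def using f by (simp_all add: divs)
  have \<Psi>1: "\<And>e. e \<in> E \<Longrightarrow> \<Psi> (2 * g e + 2) = e" "\<And>e. e \<in> E \<Longrightarrow> \<Psi> (2 * g e + 3) = e"
    unfolding \<Psi>_def using g by (simp_all only: divs inv_into_f_f)
  have tcs: "two_clique_sum (\<phi>1 ` VA) (\<psi>1 ` EA) h1 0 (\<phi>2 ` VB) (\<psi>2 ` EB) h2 1 V E h"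
    unfolding two_clique_sum_def
  proof (intro exI[of _ Suc] exI[of _ \<Phi>] exI[of _ \<Psi>] conjI)
    show "bij_betw Suc (h1 0) (h2 1)" unfolding h1d h2d bij_betw_def by auto
    have A1: "\<Phi> ` \<phi>1 ` VA = VA" unfolding image_image \<phi>1_def
      by (rule image_id_on) (use \<Phi>1(1) VAV(1) in auto)
    have A2: "\<Phi> ` \<phi>2 ` VB = VB" unfolding image_image \<phi>2_def
      by (rule image_id_on) (use \<Phi>1(2) VAV(2) in auto)
    show "\<Phi> ` (\<phi>1 ` VA \<union> \<phi>2 ` VB) = V" unfolding image_Un A1 A2 UAB ..
    show "\<forall>u\<in>\<phi>1 ` VA \<union> \<phi>2 ` VB. \<forall>w\<in>\<phi>1 ` VA \<union> \<phi>2 ` VB.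
       (\<Phi> u = \<Phi> w) = (u = w \<or> u \<in> h1 0 \<and> w = Suc u \<or> w \<in> h1 0 \<and> u = Suc w)"
      unfolding h1d \<Phi>_def \<phi>1_def \<phi>2_def by (rule clique_phi[OF f VAV IAB])
    show "bij_betw \<Psi> (\<psi>1 ` EA - {0} \<union> (\<psi>2 ` EB - {1})) E"
      unfolding E1m E2m bij_betw_def
    proof
      show "\<Psi> ` ((\<lambda>e. 2 * g e + 2) ` side E h x y A \<union> (\<lambda>e. 2 * g e + 3) ` side E h x y B) = E"
      proof -
        have "\<Psi> ` (\<lambda>e. 2 * g e + 2) ` side E h x y A = side E h x y A"
          unfolding image_image by (rule image_id_on) (use \<Psi>1(1) sAE(1) in auto)
        moreover have "\<Psi> ` (\<lambda>e. 2 * g e + 3) ` side E h x y B = side E h x y B"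
          unfolding image_image by (rule image_id_on) (use \<Psi>1(2) sAE(2) in auto)
        ultimately show ?thesis using part by (simp add: image_Un)
      qed
      show "inj_on \<Psi> ((\<lambda>e. 2 * g e + 2) ` side E h x y A \<union> (\<lambda>e. 2 * g e + 3) ` side E h x y B)"
      proof (rule inj_onI)
        fix n m assume n: "n \<in> (\<lambda>e. 2 * g e + 2) ` side E h x y A \<union> (\<lambda>e. 2 * g e + 3) ` side E h x y B"
          and m: "m \<in> (\<lambda>e. 2 * g e + 2) ` side E h x y A \<union> (\<lambda>e. 2 * g e + 3) ` side E h x y B"
          and eq: "\<Psi> n = \<Psi> m"
        from n obtain e where e: "(e \<in> side E h x y A \<and> n = 2 * g e + 2) \<or> (e \<in> side E h x y B \<and> n = 2 * g e + 3)" by blast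
        from m obtain e' where e': "(e' \<in> side E h x y A \<and> m = 2 * g e' + 2) \<or> (e' \<in> side E h x y B \<and> m = 2 * g e' + 3)" by blast
        have eE: "e \<in> E" using e sAE by auto
        have eE': "e' \<in> E" using e' sAE by auto
        have "\<Psi> n = e" using e \<Psi>1[OF eE] by auto
        moreover have "\<Psi> m = e'" using e' \<Psi>1[OF eE'] by auto
        ultimately have "e = e'" using eq by simp
        then show "n = m" using e e' dis by auto
      qed
    qed
    show "\<forall>e\<in>\<psi>1 ` EA - {0}. h (\<Psi> e) = \<Phi> ` h1 e"
      unfolding E1m
    proof
      fix n assume "n \<in> (\<lambda>e. 2 * g e + 2) ` side E h x y A"
      then obtain e where e: "e \<in> side E h x y A" "n = 2 * g e + 2" by auto
      have eE: "e \<in> E" using e sAE by auto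
      have "h1 n = \<phi>1 ` h e" using hh1[of "Some e"] e unfolding EA_def \<psi>1_def image_insert image_image by auto
      moreover have "\<Phi> ` \<phi>1 ` h e = h e" unfolding image_image \<phi>1_def
        by (rule image_id_on) (use \<Phi>1(1) a.eV(1)[OF eE] in auto)
      ultimately show "h (\<Psi> n) = \<Phi> ` h1 n" using \<Psi>1(1)[OF eE] e by simp
    qed
    show "\<forall>e\<in>\<psi>2 ` EB - {1}. h (\<Psi> e) = \<Phi> ` h2 e"
      unfolding E2m
    proof
      fix n assume "n \<in> (\<lambda>e. 2 * g e + 3) ` side E h x y B"
      then obtain e where e: "e \<in> side E h x y B" "n = 2 * g e + 3" by auto
      have eE: "e \<in> E" using e sAE by auto
      have "h2 n = \<phi>2 ` h e" using hh2[of "Some e"] e unfolding EB_def \<psi>2_def image_insert image_image by auto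
      moreover have "\<Phi> ` \<phi>2 ` h e = h e" unfolding image_image \<phi>2_def
        by (rule image_id_on) (use \<Phi>1(2) a.eV(1)[OF eE] in auto)
      ultimately show "h (\<Psi> n) = \<Phi> ` h2 n" using \<Psi>1(2)[OF eE] e by simp
    qed
  qed
  have V12: "\<phi>1 ` VA \<inter> \<phi>2 ` VB = {}" unfolding \<phi>1_def \<phi>2_def using par by auto
  have E12: "\<psi>1 ` EA \<inter> \<psi>2 ` EB = {}"
  proof (rule ccontr)
    assume "\<psi>1 ` EA \<inter> \<psi>2 ` EB \<noteq> {}"
    then obtain o1 o2 where "\<psi>1 o1 = \<psi>2 o2" by auto
    moreover have "even (\<psi>1 z)" for z unfolding \<psi>1_def by (cases z) auto
    moreover have "odd (\<psi>2 z)" for z unfolding \<psi>2_def by (cases z) auto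
    ultimately show False by metis
  qed
  have d1: "0 \<in> \<psi>1 ` EA" unfolding EA_def \<psi>1_def by force
  have d2: "1 \<in> \<psi>2 ` EB" unfolding EB_def \<psi>2_def by force
  show ?thesis
    apply (rule conjI[OF noX])
    apply (rule exI[of _ "\<phi>1 ` VA"], rule exI[of _ "\<psi>1 ` EA"], rule exI[of _ h1], rule exI[of _ "0::nat"])
    apply (rule exI[of _ "\<phi>2 ` VB"], rule exI[of _ "\<psi>2 ` EB"], rule exI[of _ h2], rule exI[of _ "1::nat"])
    using sim1 bis1 sim2 bis2 V12 E12 d1 d2 tcs by blast
qed


end
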